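(* Let $P$ be a finite graded bowtie-free poset of rank $n$ with $\hat0,\hat1$ and a good $\mathcal{H}_n(0)$ action $U_1,\dots,U_{n-1}$, let $\mathfrak m_0$ be the unique maximal chain with empty descent set, and let $\mathfrak m$ be any maximal chain. If $U_{i_1}\cdots U_{i_r}(\mathfrak m)=\mathfrak m_0$ and $U_{j_1}\cdots U_{j_s}(\mathfrak m)=\mathfrak m_0$ are both restless, then $s_{i_1}s_{i_2}\cdots s_{i_r}=s_{j_1}s_{j_2}\cdots s_{j_s}$ as permutations of $[n]$.
   Context: $s_i$ is the adjacent transposition $(i\ i+1)$ of $[n]$. Bowtie-free: no distinct $a,b,c,d$ with $a$ and $b$ each covering both $c$ and $d$. A good $\mathcal{H}_n(0)$ action is a family $U_1,\dots,U_{n-1}$ of maps on the set $\mathcal{M}(P)$ of maximal chains with: $U_i(\mathfrak m)$ agrees with $\mathfrak m$ except possibly at rank $i$; $U_i^2=U_i$; $U_iU_j=U_jU_i$ for $|i-j|\ge2$; $U_iU_{i+1}U_i=U_{i+1}U_iU_{i+1}$; and $\omega F_P=\mathrm{ch}(\chi_P)$ ($\chi_P$ the character of the $\mathcal{H}_n(0)$-module $\mathbb{C}\mathcal{M}(P)$ with $T_i=-U_i$, $F_P$ Ehrenborg's flag quasisymmetric function $\sum x_1^{\mathrm{rk}(t_0,t_1)}\cdots x_k^{\mathrm{rk}(t_{k-1},t_k)}$ over multichains $\hat0=t_0\le\cdots\le t_{k-1}<t_k=\hat1$, $\omega(L_{S,n})=L_{[n-1]\setminus S,n}$ on Gessel's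 fundamental quasisymmetric functions, $\mathrm{ch}(\chi_S)=L_{S,n}$ for the one-dimensional characters $\chi_S$: $T_i\mapsto-1$ for $i\in S$, $0$ otherwise). The descent set of $\mathfrak m$ is $\{i:U_i(\mathfrak m)\ne\mathfrak m\}$; such a $P$ has exactly one maximal chain $\mathfrak m_0$ with empty descent set. An expression $U_{i_1}\cdots U_{i_r}(\mathfrak m)=\mathfrak m'$ is restless if $U_{i_r}(\mathfrak m)\ne\mathfrak m$ (when $r\ge1$) and $U_{i_j}\cdots U_{i_r}(\mathfrak m)\ne U_{i_{j+1}}\cdots U_{i_r}(\mathfrak m)$ for $j=1,\dots,r-1$. *)

theory Defs
  imports "HOL-Library.FuncSet" "HOL-Combinatorics.Transposition"
begin

definition covers_in :: "'a::order set \<Rightarrow> 'a \<Rightarrow> 'a \<Rightarrow> bool" where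
  "covers_in P x y \<longleftrightarrow> x \<in> P \<and> y \<in> P \<and> x < y \<and> \<not> (\<exists>z\<in>P. x < z \<and> z < y)"
  (* "y covers x" *)

definition sat_chain :: "'a::order set \<Rightarrow> nat \<Rightarrow> (nat \<Rightarrow> 'a) \<Rightarrow> 'a \<Rightarrow> 'a \<Rightarrow> bool" where
  "sat_chain P k c x y \<longleftrightarrow> c 0 = x \<and> c k = y \<and> (\<forall>j<k. covers_in P (c j) (c (Suc j)))"

definition graded_bounded :: "'a::order set \<Rightarrow> 'a \<Rightarrow> 'a \<Rightarrow> nat \<Rightarrow> bool" where
  "graded_bounded P bz tp n \<longleftrightarrow> finite P \<and> bz \<in> P \<and> tp \<in> P \<and>
     (\<forall>x\<in>P. bz \<le> x \<and> x \<le> tp) \<and>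
     (\<forall>k c. sat_chain P k c bz tp \<longrightarrow> k = n)"

definition prank :: "'a::order set \<Rightarrow> 'a \<Rightarrow> 'a \<Rightarrow> nat" where
  "prank P bz x = Max {k. \<exists>c. sat_chain P k c bz x}"

definition bowtie_free :: "'a::order set \<Rightarrow> bool" where
  "bowtie_free P \<longleftrightarrow> \<not> (\<exists>a\<in>P. \<exists>b\<in>P. \<exists>c\<in>P. \<exists>d\<in>P.
      distinct [a, b, c, d] \<and> covers_in P c a \<and> covers_in P d a \<and>
      covers_in P c b \<and> covers_in P d b)"

(* maximal chains, indexed by rank: m j is the element of rank j *)
definition maxchains :: "'a::order set \<Rightarrow> 'a \<Rightarrow> 'a \<Rightarrow> nat \<Rightarrow> (nat \<Rightarrow> 'a) set" where
  "maxchains P bz tp n = {m \<in> {0..n} \<rightarrow>\<^sub>E P. sat_chain P n m bz tp}"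

(* U_{i_1} ... U_{i_r} (m) for the word [i_1,...,i_r] *)
definition applyw :: "(nat \<Rightarrow> 'b \<Rightarrow> 'b) \<Rightarrow> nat list \<Rightarrow> 'b \<Rightarrow> 'b" where
  "applyw U w = foldr (\<lambda>i f. U i \<circ> f) w id"

definition descents :: "nat \<Rightarrow> (nat \<Rightarrow> 'b \<Rightarrow> 'b) \<Rightarrow> 'b \<Rightarrow> nat set" where
  "descents n U m = {i \<in> {1..<n}. U i m \<noteq> m}"

definition restless :: "(nat \<Rightarrow> 'b \<Rightarrow> 'b) \<Rightarrow> nat list \<Rightarrow> 'b \<Rightarrow> bool" where
  "restless U w m \<longleftrightarrow> (\<forall>k<length w. U (w ! k) (applyw U (drop (Suc k) w) m) \<noteq> applyw U (drop (Suc k) w) m)"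

definition hecke_action :: "'a::order set \<Rightarrow> 'a \<Rightarrow> 'a \<Rightarrow> nat \<Rightarrow> (nat \<Rightarrow> (nat \<Rightarrow> 'a) \<Rightarrow> (nat \<Rightarrow> 'a)) \<Rightarrow> bool" where
  "hecke_action P bz tp n U \<longleftrightarrow> (let M = maxchains P bz tp n in
     (\<forall>i\<in>{1..<n}. \<forall>m\<in>M. U i m \<in> M \<and> (\<forall>j. j \<noteq> i \<longrightarrow> U i m j = m j) \<and> U i (U i m) = U i m) \<and>
     (\<forall>i\<in>{1..<n}. \<forall>j\<in>{1..<n}. \<forall>m\<in>M. (i + 2 \<le> j \<or> j + 2 \<le> i) \<longrightarrow> U i (U j m) = U j (U i m)) \<and>
     (\<forall>i. i \<in> {1..<n} \<and> Suc i \<in> {1..<n} \<longrightarrow>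
        (\<forall>m\<in>M. U i (U (Suc i) (U i m)) = U (Suc i) (U i (U (Suc i) m)))))"

(* character of C M(P) with T_i = -U_i, evaluated on T_{i_1}...T_{i_r}:
   trace of (-1)^r times the permutation-type matrix of U_{i_1}...U_{i_r} *)
definition charP :: "'a::order set \<Rightarrow> 'a \<Rightarrow> 'a \<Rightarrow> nat \<Rightarrow> (nat \<Rightarrow> (nat \<Rightarrow> 'a) \<Rightarrow> (nat \<Rightarrow> 'a)) \<Rightarrow> nat list \<Rightarrow> int" where
  "charP P bz tp n U w = (-1) ^ length w * int (card {m \<in> maxchains P bz tp n. applyw U w m = m})"

definition chiS :: "nat set \<Rightarrow> nat list \<Rightarrow> int" where
  "chiS S w = (\<Prod>i\<leftarrow>w. if i \<in> S then -1 else 0)"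

(* ---------- quasisymmetric functions (homogeneous), as coefficient functions
   on exponent vectors a : nat => nat, a v = exponent of x_v (v >= 1) ---------- *)

definition gesselL :: "nat \<Rightarrow> nat set \<Rightarrow> (nat \<Rightarrow> nat) \<Rightarrow> int" where
  "gesselL n S a = int (card {ix \<in> {1..n} \<rightarrow>\<^sub>E UNIV.
      (\<forall>j\<in>{1..n}. 1 \<le> ix j) \<and>
      (\<forall>j\<in>{1..<n}. ix j \<le> ix (Suc j) \<and> (j \<in> S \<longrightarrow> ix j < ix (Suc j))) \<and>
      (\<forall>v. a v = card {j \<in> {1..n}. ix j = v})})"

(* Ehrenborg's flag quasisymmetric function F_P: sum over multichains
   0 = t_0 <= ... <= t_{k-1} < t_k = 1 of x_1^{rk(t_0,t_1)} ... x_k^{rk(t_{k-1},t_k)} *)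
definition ehrenborgF :: "'a::order set \<Rightarrow> 'a \<Rightarrow> 'a \<Rightarrow> (nat \<Rightarrow> nat) \<Rightarrow> int" where
  "ehrenborgF P bz tp a = int (card {(k, t). k \<ge> 1 \<and> t \<in> {0..k} \<rightarrow>\<^sub>E P \<and>
      t 0 = bz \<and> t k = tp \<and> t (k - 1) < t k \<and>
      (\<forall>j\<in>{1..k}. t (j - 1) \<le> t j) \<and>
      (\<forall>v. a v = (if 1 \<le> v \<and> v \<le> k then prank P bz (t v) - prank P bz (t (v - 1)) else 0))})"

definition Lcomb :: "nat \<Rightarrow> (nat set \<Rightarrow> int) \<Rightarrow> (nat \<Rightarrow> nat) \<Rightarrow> int" where
  "Lcomb n d a = (\<Sum>S\<in>Pow {1..<n}. d S * gesselL n S a)"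

(* omega f = g, where omega(L_{S,n}) = L_{[n-1]-S,n} extended linearly *)
definition is_omega :: "nat \<Rightarrow> ((nat \<Rightarrow> nat) \<Rightarrow> int) \<Rightarrow> ((nat \<Rightarrow> nat) \<Rightarrow> int) \<Rightarrow> bool" where
  "is_omega n f g \<longleftrightarrow> (\<exists>d. f = Lcomb n d \<and> g = Lcomb n (\<lambda>S. d ({1..<n} - S)))"

(* ch(chi) = g, where ch is the linear map with ch(chi_S) = L_{S,n} *)
definition is_ch :: "nat \<Rightarrow> (nat list \<Rightarrow> int) \<Rightarrow> ((nat \<Rightarrow> nat) \<Rightarrow> int) \<Rightarrow> bool" where
  "is_ch n chi g \<longleftrightarrow> (\<exists>c. (\<forall>w\<in>lists {1..<n}. chi w = (\<Sum>S\<in>Pow {1..<n}. c S * chiS S w)) \<and>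
       g = Lcomb n c)"

definition good_action :: "'a::order set \<Rightarrow> 'a \<Rightarrow> 'a \<Rightarrow> nat \<Rightarrow> (nat \<Rightarrow> (nat \<Rightarrow> 'a) \<Rightarrow> (nat \<Rightarrow> 'a)) \<Rightarrow> bool" where
  "good_action P bz tp n U \<longleftrightarrow> hecke_action P bz tp n U \<and>
     (\<exists>g. is_omega n (ehrenborgF P bz tp) g \<and> is_ch n (charP P bz tp n U) g)"

(* s_{i_1} s_{i_2} ... s_{i_r} as a permutation (of [n]; it fixes everything else) *)
definition sperm :: "nat list \<Rightarrow> nat \<Rightarrow> nat" where
  "sperm w = foldr (\<lambda>i p. transpose i (Suc i) \<circ> p) w id"

end

theory Submission
  imports Defs
begin

lemma applyw_Nil[simp]: "applyw U [] x = x"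
  by (simp add: applyw_def)

lemma applyw_Cons[simp]: "applyw U (i # w) x = U i (applyw U w x)"
  by (simp add: applyw_def)

lemma applyw_append: "applyw U (u @ v) x = applyw U u (applyw U v x)"
  by (induction u) auto

lemma restless_Nil[simp]: "restless U [] x"
  by (simp add: restless_def)

lemma restless_Cons: "restless U (i # w) x \<longleftrightarrow>
    U i (applyw U w x) \<noteq> applyw U w x \<and> restless U w x"
proof
  assume a: "restless U (i # w) x"
  have "U i (applyw U w x) \<noteq> applyw U w x" using a[unfolded restless_def, rule_format, of 0] by simp
  moreover have "restless U w x" unfolding restless_def
  proof (intro allI impI)
    fix k assume "k < length w"
    then show "U (w ! k) (applyw U (drop (Suc k) w) x) \<noteq> applyw U (drop (Suc k) w) x"
      using a[unfolded restless_def, rule_format, of "Suc k"] by simp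
  qed
  ultimately show "U i (applyw U w x) \<noteq> applyw U w x \<and> restless U w x" by blast
next
  assume a: "U i (applyw U w x) \<noteq> applyw U w x \<and> restless U w x"
  show "restless U (i # w) x" unfolding restless_def
  proof (intro allI impI)
    fix k assume k: "k < length (i # w)"
    show "U ((i # w) ! k) (applyw U (drop (Suc k) (i # w)) x) \<noteq> applyw U (drop (Suc k) (i # w)) x"
    proof (cases k)
      case 0 then show ?thesis using a by simp
    next
      case (Suc k') then show ?thesis using a k unfolding restless_def by simp
    qed
  qed
qed

lemma restless_append: "restless U (u @ v) x \<longleftrightarrow> restless U v x \<and> restless U u (applyw U v x)"
  by (induction u) (auto simp: restless_Cons applyw_append)

lemma restless_snoc: "restless U (u @ [i]) x \<longleftrightarrow> U i x \<noteq> x \<and> restless U u (U i x)"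
  by (simp add: restless_append restless_Cons)

lemma sperm_Nil[simp]: "sperm [] = id" by (simp add: sperm_def)
lemma sperm_Cons[simp]: "sperm (i # w) = transpose i (Suc i) \<circ> sperm w" by (simp add: sperm_def)
lemma sperm_append: "sperm (u @ v) = sperm u \<circ> sperm v"
  by (induction u) auto

lemma transp_comm: "i + 2 \<le> j \<or> j + 2 \<le> i \<Longrightarrow>
   transpose i (Suc i) \<circ> transpose j (Suc j) = transpose j (Suc j) \<circ> transpose i (Suc i)"
  by (auto simp: fun_eq_iff transpose_def)

lemma transp_braid:
  "transpose i (Suc i) \<circ> (transpose (Suc i) (Suc (Suc i)) \<circ> transpose i (Suc i)) =
   transpose (Suc i) (Suc (Suc i)) \<circ> (transpose i (Suc i) \<circ> transpose (Suc i) (Suc (Suc i)))"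
  by (auto simp: fun_eq_iff transpose_def)

lemma chiS_eq: "chiS S w = (if set w \<subseteq> S then (-1) ^ length w else 0)"
  by (induction w) (auto simp: chiS_def)

lemma applyw_common: "(\<forall>j\<in>set v. U j m = m) \<Longrightarrow> applyw U v m = m"
  by (induction v) auto



context
  fixes P :: "'a::order set" and bz tp :: 'a and n :: nat
    and U :: "nat \<Rightarrow> (nat \<Rightarrow> 'a) \<Rightarrow> (nat \<Rightarrow> 'a)"
  assumes H: "hecke_action P bz tp n U"
begin

abbreviation "MM \<equiv> maxchains P bz tp n"

lemma U_in: "i \<in> {1..<n} \<Longrightarrow> m \<in> MM \<Longrightarrow> U i m \<in> MM"
  using H unfolding hecke_action_def Let_def by blast
lemma U_other: "i \<in> {1..<n} \<Longrightarrow> m \<in> MM \<Longrightarrow> j \<noteq> i \<Longrightarrow> U i m j = m j"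
  using H unfolding hecke_action_def Let_def by blast
lemma U_idem: "i \<in> {1..<n} \<Longrightarrow> m \<in> MM \<Longrightarrow> U i (U i m) = U i m"
  using H unfolding hecke_action_def Let_def by blast
lemma U_comm: "i \<in> {1..<n} \<Longrightarrow> j \<in> {1..<n} \<Longrightarrow> m \<in> MM \<Longrightarrow> i + 2 \<le> j \<or> j + 2 \<le> i
   \<Longrightarrow> U i (U j m) = U j (U i m)"
  using H unfolding hecke_action_def Let_def by blast
lemma U_braid: "i \<in> {1..<n} \<Longrightarrow> Suc i \<in> {1..<n} \<Longrightarrow> m \<in> MM
   \<Longrightarrow> U i (U (Suc i) (U i m)) = U (Suc i) (U i (U (Suc i) m))"
  using H unfolding hecke_action_def Let_def by blast

lemma U_neq_at: "i \<in> {1..<n} \<Longrightarrow> m \<in> MM \<Longrightarrow> U i m \<noteq> m \<Longrightarrow> U i m i \<noteq> m i"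
  using U_other by (metis ext)

lemma applyw_in: "w \<in> lists {1..<n} \<Longrightarrow> m \<in> MM \<Longrightarrow> applyw U w m \<in> MM"
  by (induction w) (auto intro: U_in)

lemma applyw_other: "w \<in> lists {1..<n} \<Longrightarrow> m \<in> MM \<Longrightarrow> k \<notin> set w \<Longrightarrow> applyw U w m k = m k"
  by (induction w) (auto simp: U_other applyw_in)

lemma cov: "m \<in> MM \<Longrightarrow> k < n \<Longrightarrow> covers_in P (m k) (m (Suc k))"
  unfolding maxchains_def sat_chain_def by blast

lemma finite_MM: "finite P \<Longrightarrow> finite MM"
proof -
  assume "finite P"
  then have "finite ({0..n} \<rightarrow>\<^sub>E P)" by (simp add: finite_PiE)
  then show ?thesis unfolding maxchains_def by simp
qed

lemma distinct_fix: "distinct v \<Longrightarrow> v \<in> lists {1..<n} \<Longrightarrow> m \<in> MM \<Longrightarrow> applyw U v m = m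
   \<Longrightarrow> \<forall>j\<in>set v. U j m = m"
proof (induction v)
  case Nil then show ?case by simp
next
  case (Cons j rest)
  define z where "z = applyw U rest m"
  have j: "j \<in> {1..<n}" and rl: "rest \<in> lists {1..<n}" and jn: "j \<notin> set rest"
    using Cons.prems by auto
  have zM: "z \<in> MM" unfolding z_def using rl Cons.prems applyw_in by blast
  have Uz: "U j z = m" using Cons.prems z_def by simp
  have Ujm: "U j m = m" using Uz U_idem[OF j zM] by simp
  have "z = m"
  proof
    fix k show "z k = m k"
    proof (cases "k = j")
      case True then show ?thesis unfolding z_def using applyw_other[OF rl Cons.prems(3)] jn by simp
    next
      case False then show ?thesis using U_other[OF j zM False] Uz by simp
    qed
  qed
  then have "\<forall>j\<in>set rest. U j m = m" using Cons.IH Cons.prems rl z_def by auto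
  then show ?case using Ujm by simp
qed

end


lemma fix_count:
  assumes G: "good_action P bz tp n U"
    and w: "w \<in> lists {1..<n}"
  shows "\<exists>c. \<forall>w\<in>lists {1..<n}. int (card {m \<in> maxchains P bz tp n. applyw U w m = m}) =
      (\<Sum>S\<in>Pow {1..<n}. if set w \<subseteq> S then c S else 0)"
proof -
  obtain g where "is_ch n (charP P bz tp n U) g" using G unfolding good_action_def by blast
  then obtain c where c: "\<forall>w\<in>lists {1..<n}. charP P bz tp n U w = (\<Sum>S\<in>Pow {1..<n}. c S * chiS S w)"
    unfolding is_ch_def by blast
  have "int (card {m \<in> maxchains P bz tp n. applyw U w m = m}) =
      (\<Sum>S\<in>Pow {1..<n}. if set w \<subseteq> S then c S else 0)" if w: "w \<in> lists {1..<n}" for w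
  proof -
    have "(-1::int) ^ length w * int (card {m \<in> maxchains P bz tp n. applyw U w m = m}) =
       (\<Sum>S\<in>Pow {1..<n}. c S * chiS S w)" using c w unfolding charP_def by simp
    also have "\<dots> = (-1::int) ^ length w * (\<Sum>S\<in>Pow {1..<n}. if set w \<subseteq> S then c S else 0)"
      unfolding chiS_eq sum_distrib_left by (rule sum.cong) auto
    finally have "(-1::int) ^ length w * int (card {m \<in> maxchains P bz tp n. applyw U w m = m}) = (-1::int) ^ length w * (\<Sum>S\<in>Pow {1..<n}. if set w \<subseteq> S then c S else 0)" .
    moreover have "(-1::int) ^ length w \<noteq> 0" by simp
    ultimately show ?thesis using mult_left_cancel[of "(-1::int) ^ length w"] by blast
  qed
  then show ?thesis by blast
qed

lemma fix_card_eq: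
  assumes G: "good_action P bz tp n U"
    and w: "w \<in> lists {1..<n}" and w': "w' \<in> lists {1..<n}" and s: "set w = set w'"
  shows "card {m \<in> maxchains P bz tp n. applyw U w m = m} = card {m \<in> maxchains P bz tp n. applyw U w' m = m}"
proof -
  obtain c where c: "\<forall>w\<in>lists {1..<n}. int (card {m \<in> maxchains P bz tp n. applyw U w m = m}) =
      (\<Sum>S\<in>Pow {1..<n}. if set w \<subseteq> S then c S else 0)" using fix_count[OF G w] by blast
  have "int (card {m \<in> maxchains P bz tp n. applyw U w m = m}) = int (card {m \<in> maxchains P bz tp n. applyw U w' m = m})"
    using c[rule_format, OF w] c[rule_format, OF w'] s by simp
  then show ?thesis by simp
qed



definition sink :: "nat \<Rightarrow> (nat \<Rightarrow> 'b \<Rightarrow> 'b) \<Rightarrow> 'b \<Rightarrow> bool" where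
  "sink n U s \<longleftrightarrow> descents n U s = {}"

context
  fixes P :: "'a::order set" and bz tp :: 'a and n :: nat
    and U :: "nat \<Rightarrow> (nat \<Rightarrow> 'a) \<Rightarrow> (nat \<Rightarrow> 'a)"
  assumes G: "good_action P bz tp n U" and B: "bowtie_free P" and FP: "finite P"
begin

lemma H: "hecke_action P bz tp n U" using G unfolding good_action_def by blast

lemmas Uin = U_in[OF H] and Uoth = U_other[OF H] and Uidem = U_idem[OF H]
  and Ucomm = U_comm[OF H] and Ubraid = U_braid[OF H] and Uneq = U_neq_at[OF H]
  and Awin = applyw_in[OF H] and Awoth = applyw_other[OF H] and dfix = distinct_fix[OF H] and cov' = cov[OF H]

definition "RR = {(U i x, x) | i x. x \<in> maxchains P bz tp n \<and> i \<in> {1..<n} \<and> U i x \<noteq> x}"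

lemma trancl_word:
  assumes "(y, x) \<in> RR\<^sup>+"
  shows "x \<in> maxchains P bz tp n \<and> (\<exists>w. w \<noteq> [] \<and> w \<in> lists {1..<n} \<and> restless U w x \<and> applyw U w x = y)"
  using assms
proof (induction rule: converse_trancl_induct)
  case (base y)
  then obtain i where "y = U i x" "x \<in> maxchains P bz tp n" "i \<in> {1..<n}" "U i x \<noteq> x"
    unfolding RR_def by blast
  then show ?case by (intro conjI exI[of _ "[i]"]) (auto simp: restless_Cons)
next
  case (step y z)
  then obtain w where w: "w \<noteq> []" "w \<in> lists {1..<n}" "restless U w x" "applyw U w x = z"
    and xM: "x \<in> maxchains P bz tp n" by blast
  obtain i where "y = U i z" "i \<in> {1..<n}" "U i z \<noteq> z"
    using step(1) unfolding RR_def by blast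
  then show ?case using w xM by (intro conjI exI[of _ "i # w"]) (auto simp: restless_Cons)
qed

lemma no_cycle:
  assumes xM: "x \<in> maxchains P bz tp n" and w: "w \<noteq> []" "w \<in> lists {1..<n}"
    and r: "restless U w x" and a: "applyw U w x = x"
  shows False
proof -
  let ?F = "\<lambda>v. {m \<in> maxchains P bz tp n. applyw U v m = m}"
  let ?C = "{m \<in> maxchains P bz tp n. \<forall>j\<in>set w. U j m = m}"
  have rw: "remdups w \<in> lists {1..<n}" using w by auto
  have e1: "card (?F w) = card (?F (remdups w))"
    using fix_card_eq[OF G w(2) rw] by simp
  have e2: "?F (remdups w) = ?C"
  proof
    show "?F (remdups w) \<subseteq> ?C" using dfix[of "remdups w"] rw by auto
    show "?C \<subseteq> ?F (remdups w)" using applyw_common[of "remdups w"] by auto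
  qed
  have sub: "?C \<subseteq> ?F w" using applyw_common[of w] by auto
  obtain u i where wu: "w = u @ [i]" using w(1) by (cases w rule: rev_cases) auto
  have "U i x \<noteq> x" using r wu by (simp add: restless_snoc)
  then have "x \<notin> ?C" using wu by auto
  moreover have "x \<in> ?F w" using xM a by simp
  ultimately have "?C \<subset> ?F w" using sub by blast
  moreover have "finite (?F w)" using finite_MM[OF H FP] by simp
  ultimately have "card ?C < card (?F w)" by (simp add: psubset_card_mono)
  then show False using e1 e2 by simp
qed

lemma wfRR: "wf RR"
proof (rule finite_acyclic_wf)
  have "RR \<subseteq> maxchains P bz tp n \<times> maxchains P bz tp n" unfolding RR_def using Uin by blast
  then show "finite RR" using finite_MM[OF H FP] by (meson finite_SigmaI finite_subset)
  show "acyclic RR" unfolding acyclic_def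
  proof
    fix x show "(x, x) \<notin> RR\<^sup>+"
    proof
      assume "(x, x) \<in> RR\<^sup>+"
      from trancl_word[OF this] show False using no_cycle by blast
    qed
  qed
qed

lemma sink_def': "sink n U s \<longleftrightarrow> descents n U s = {}" by (simp add: sink_def)

lemma sink_iff: "sink n U s \<longleftrightarrow> (\<forall>i\<in>{1..<n}. U i s = s)"
  unfolding sink_def descents_def by auto

lemma exists_path: "x \<in> maxchains P bz tp n \<Longrightarrow>
  \<exists>t. t \<in> lists {1..<n} \<and> restless U t x \<and> sink n U (applyw U t x)"
proof (induction x rule: wf_induct[OF wfRR])
  case (1 x)
  show ?case
  proof (cases "sink n U x")
    case True then show ?thesis by (intro exI[of _ "[]"]) auto
  next
    case False
    then obtain i where i: "i \<in> {1..<n}" "U i x \<noteq> x" using sink_iff by blast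
    then have "(U i x, x) \<in> RR" unfolding RR_def using 1(2) by blast
    then obtain t where t: "t \<in> lists {1..<n}" "restless U t (U i x)" "sink n U (applyw U t (U i x))"
      using 1(1) Uin[OF i(1) 1(2)] by blast
    show ?thesis using t i by (intro exI[of _ "t @ [i]"]) (auto simp: restless_snoc applyw_append)
  qed
qed

lemma bt:
  assumes "covers_in P c e" "covers_in P c f" "covers_in P d e" "covers_in P d f" "c \<noteq> d" "e \<noteq> f"
  shows False
proof -
  have "distinct [e, f, c, d]" using assms unfolding covers_in_def by auto
  then show False using B assms unfolding bowtie_free_def covers_in_def by blast
qed

lemma adj:
  assumes xM: "x \<in> maxchains P bz tp n" and i: "i \<in> {1..<n}" and si: "Suc i \<in> {1..<n}"
    and nx1: "U i x \<noteq> x" and nx2: "U (Suc i) x \<noteq> x"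
  shows "restless U [i, Suc i] (U i x) \<and> restless U [Suc i, i] (U (Suc i) x) \<and>
         applyw U [i, Suc i] (U i x) = applyw U [Suc i, i] (U (Suc i) x)"
proof -
  define S where "S = Suc i"
  define y where "y = U i x"
  define y1 where "y1 = U S y"
  define z where "z = U i y1"
  define y' where "y' = U S x"
  define y1' where "y1' = U i y'"
  have si': "S \<in> {1..<n}" using si S_def by simp
  have yM: "y \<in> maxchains P bz tp n" using Uin[OF i xM] y_def by simp
  have y1M: "y1 \<in> maxchains P bz tp n" using Uin[OF si' yM] y1_def by simp
  have zM: "z \<in> maxchains P bz tp n" using Uin[OF i y1M] z_def by simp
  have y'M: "y' \<in> maxchains P bz tp n" using Uin[OF si' xM] y'_def by simp
  have y1'M: "y1' \<in> maxchains P bz tp n" using Uin[OF i y'M] y1'_def by simp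
  have zz: "U S y1' = z" unfolding z_def y1_def y_def y1'_def y'_def S_def
    using Ubraid[OF i si xM] by simp
  have iS: "i \<noteq> S" "S \<noteq> i" using S_def by auto
  have in_: "i < n" using si by simp
  have f1: "y S = x S" using Uoth[OF i xM iS(2)] y_def by simp
  have f2: "y1 i = y i" using Uoth[OF si' yM iS(1)] y1_def by simp
  have f3: "z S = y1 S" using Uoth[OF i y1M iS(2)] z_def by simp
  have f4: "y' i = x i" using Uoth[OF si' xM iS(1)] y'_def by simp
  have f5: "y1' S = y' S" using Uoth[OF i y'M iS(2)] y1'_def by simp
  have f6: "y1' i = z i" using Uoth[OF si' y1'M iS(1)] zz by metis
  have cx: "covers_in P (x i) (x S)" using cov'[OF xM in_] S_def by simp
  have cy: "covers_in P (y i) (x S)" using cov'[OF yM in_] S_def f1 by simp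
  have cy1: "covers_in P (y i) (y1 S)" using cov'[OF y1M in_] S_def f2 by simp
  have cz: "covers_in P (z i) (y1 S)" using cov'[OF zM in_] S_def f3 by simp
  have cy': "covers_in P (x i) (y' S)" using cov'[OF y'M in_] S_def f4 by simp
  have cy1': "covers_in P (z i) (y' S)" using cov'[OF y1'M in_] S_def f5 f6 by simp
  have na: "y i \<noteq> x i" using Uneq[OF i xM nx1] y_def by simp
  have nb: "y' S \<noteq> x S" using Uneq[OF si' xM] nx2 y'_def S_def by simp
  have c1: "y1 S \<noteq> x S"
  proof
    assume e: "y1 S = x S"
    have "z i = x i"
    proof (rule ccontr)
      assume "z i \<noteq> x i"
      then show False using bt[OF cz[unfolded e] cy1' cx cy'] nb by auto
    qed
    have "z = x"
    proof
      fix k show "z k = x k"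
      proof -
        consider "k = i" | "k = S" | "k \<noteq> i" "k \<noteq> S" by blast
        then show ?thesis
        proof cases
          case 1 then show ?thesis using \<open>z i = x i\<close> by simp
        next
          case 2 then show ?thesis using f3 e by simp
        next
          case 3 then show ?thesis unfolding z_def y1_def y_def
            using Uoth[OF i y1M 3(1)] Uoth[OF si' yM 3(2)] Uoth[OF i xM 3(1)] y1_def y_def by simp
        qed
      qed
    qed
    moreover have "U i z = z" unfolding z_def using Uidem[OF i y1M] .
    ultimately show False using nx1 by simp
  qed
  have c2: "z i \<noteq> x i"
  proof
    assume e: "z i = x i"
    show False using bt[OF cx cz[unfolded e] cy cy1] na c1 by auto
  qed
  have c3: "\<not> covers_in P (y i) (y' S)"
  proof
    assume e: "covers_in P (y i) (y' S)"
    show False using bt[OF cx cy' cy e] na nb by auto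
  qed
  have n1: "U S y \<noteq> y" using c1 f1 y1_def by auto
  have n2: "U i y1 \<noteq> y1" using c3 cy1' f2 z_def by auto
  have n3: "U i y' \<noteq> y'" using c2 f4 f6 y1'_def by auto
  have n4: "U S y1' \<noteq> y1'" using c3 cy1 zz f3 f5 by auto
  show ?thesis using n1 n2 n3 n4 zz
    unfolding S_def y_def y1_def z_def y'_def y1'_def by (simp add: restless_Cons)
qed

lemma comm_step:
  assumes xM: "x \<in> maxchains P bz tp n" and i: "i \<in> {1..<n}" and j: "j \<in> {1..<n}"
    and d: "i + 2 \<le> j \<or> j + 2 \<le> i"
    and nx1: "U i x \<noteq> x" and nx2: "U j x \<noteq> x"
  shows "restless U [j] (U i x) \<and> applyw U [j] (U i x) = applyw U [i] (U j x)"
proof -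
  have ij: "j \<noteq> i" using d by auto
  have e: "U j (U i x) = U i (U j x)" using Ucomm[OF i j xM d] by simp
  have "U i (U j x) j = U j x j" using Uoth[OF i Uin[OF j xM] ij] .
  moreover have "U i x j = x j" using Uoth[OF i xM ij] .
  moreover have "U j x j \<noteq> x j" using Uneq[OF j xM nx2] .
  ultimately have "U j (U i x) \<noteq> U i x" using e by metis
  then show ?thesis using e by (simp add: restless_Cons)
qed

lemma lc:
  assumes xM: "x \<in> maxchains P bz tp n" and i: "i \<in> {1..<n}" and j: "j \<in> {1..<n}"
    and ij: "i \<noteq> j" and nx1: "U i x \<noteq> x" and nx2: "U j x \<noteq> x"
  shows "\<exists>vi vj. vi \<in> lists {1..<n} \<and> vj \<in> lists {1..<n} \<and> restless U vi (U i x) \<and>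
     restless U vj (U j x) \<and> applyw U vi (U i x) = applyw U vj (U j x) \<and>
     sperm (vi @ [i]) = sperm (vj @ [j])"
proof -
  consider "i + 2 \<le> j \<or> j + 2 \<le> i" | "j = Suc i" | "i = Suc j" using ij by linarith
  then show ?thesis
  proof cases
    case 1
    have a: "restless U [j] (U i x) \<and> applyw U [j] (U i x) = applyw U [i] (U j x)"
      using comm_step[OF xM i j 1 nx1 nx2] .
    have b: "restless U [i] (U j x)" using comm_step[OF xM j i _ nx2 nx1] 1 by auto
    show ?thesis using a b i j transp_comm[OF 1]
      by (intro exI[of _ "[j]"] exI[of _ "[i]"]) auto
  next
    case 2
    have a: "restless U [i, Suc i] (U i x) \<and> restless U [Suc i, i] (U (Suc i) x) \<and>
         applyw U [i, Suc i] (U i x) = applyw U [Suc i, i] (U (Suc i) x)"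
      using adj[OF xM i] 2 j nx1 nx2 by blast
    show ?thesis using a 2 j i transp_braid[of i]
      by (intro exI[of _ "[i, Suc i]"] exI[of _ "[Suc i, i]"]) auto
  next
    case 3
    have a: "restless U [j, Suc j] (U j x) \<and> restless U [Suc j, j] (U (Suc j) x) \<and>
         applyw U [j, Suc j] (U j x) = applyw U [Suc j, j] (U (Suc j) x)"
      using adj[OF xM j] 3 i nx1 nx2 by blast
    show ?thesis using a 3 j i transp_braid[of j]
      by (intro exI[of _ "[Suc j, j]"] exI[of _ "[j, Suc j]"]) auto
  qed
qed

lemma main_claim:
  "x \<in> maxchains P bz tp n \<Longrightarrow> \<forall>w w'. w \<in> lists {1..<n} \<and> w' \<in> lists {1..<n} \<and>
     restless U w x \<and> restless U w' x \<and> sink n U (applyw U w x) \<and> sink n U (applyw U w' x) \<longrightarrow>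
     applyw U w x = applyw U w' x \<and> sperm w = sperm w'"
proof (induction x rule: wf_induct[OF wfRR])
  case (1 x)
  note IH = 1(1) and xM = 1(2)
  show ?case
  proof (intro allI impI)
    fix w w'
    assume A: "w \<in> lists {1..<n} \<and> w' \<in> lists {1..<n} \<and>
     restless U w x \<and> restless U w' x \<and> sink n U (applyw U w x) \<and> sink n U (applyw U w' x)"
    show "applyw U w x = applyw U w' x \<and> sperm w = sperm w'"
    proof (cases w rule: rev_cases)
      case Nil
      show ?thesis
      proof (cases w' rule: rev_cases)
        case Nil then show ?thesis using \<open>w = []\<close> by simp
      next
        case (snoc u' j)
        then show ?thesis using A Nil by (auto simp: restless_snoc sink_iff)
      qed
    next
      case (snoc u i)
      show ?thesis
      proof (cases w' rule: rev_cases)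
        case Nil then show ?thesis using A snoc by (auto simp: restless_snoc sink_iff)
      next
        case snoc': (snoc u' j)
        have i: "i \<in> {1..<n}" and j: "j \<in> {1..<n}" and ul: "u \<in> lists {1..<n}" and ul': "u' \<in> lists {1..<n}"
          using A snoc snoc' by auto
        have ni: "U i x \<noteq> x" and ri: "restless U u (U i x)"
          using A snoc by (auto simp: restless_snoc)
        have nj: "U j x \<noteq> x" and rj: "restless U u' (U j x)"
          using A snoc' by (auto simp: restless_snoc)
        have si: "sink n U (applyw U u (U i x))" using A snoc by (simp add: applyw_append)
        have sj: "sink n U (applyw U u' (U j x))" using A snoc' by (simp add: applyw_append)
        have Ri: "(U i x, x) \<in> RR" unfolding RR_def using xM i ni by blast
        have Rj: "(U j x, x) \<in> RR" unfolding RR_def using xM j nj by blast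
        note IHi = IH[rule_format, OF Ri Uin[OF i xM]]
        note IHj = IH[rule_format, OF Rj Uin[OF j xM]]
        show ?thesis
        proof (cases "i = j")
          case True
          then show ?thesis using IHi[of u u'] ul ul' ri rj si sj snoc snoc'
            by (simp add: applyw_append sperm_append)
        next
          case False
          obtain vi vj where v: "vi \<in> lists {1..<n}" "vj \<in> lists {1..<n}" "restless U vi (U i x)"
            "restless U vj (U j x)" "applyw U vi (U i x) = applyw U vj (U j x)"
            "sperm (vi @ [i]) = sperm (vj @ [j])"
            using lc[OF xM i j False ni nj] by blast
          define zz where "zz = applyw U vi (U i x)"
          have zM: "zz \<in> maxchains P bz tp n" using Awin[OF v(1) Uin[OF i xM]] zz_def by simp
          obtain t where t: "t \<in> lists {1..<n}" "restless U t zz" "sink n U (applyw U t zz)"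
            using exists_path[OF zM] by blast
          have e1: "applyw U u (U i x) = applyw U t zz \<and> sperm u = sperm (t @ vi)"
            using IHi[of u "t @ vi"] ul t v ri si zz_def by (simp add: restless_append applyw_append)
          have e2: "applyw U u' (U j x) = applyw U t zz \<and> sperm u' = sperm (t @ vj)"
            using IHj[of u' "t @ vj"] ul' t v rj sj zz_def by (simp add: restless_append applyw_append)
          have "sperm w = sperm t \<circ> sperm (vi @ [i])" using e1 snoc by (simp add: sperm_append comp_assoc)
          moreover have "sperm w' = sperm t \<circ> sperm (vj @ [j])" using e2 snoc' by (simp add: sperm_append comp_assoc)
          ultimately show ?thesis using e1 e2 v(6) snoc snoc' by (simp add: applyw_append)
        qed
      qed
    qed
  qed
qed

end

theorem mainTheorem12:
  fixes P :: "'a::order set" and bz tp :: 'a and n :: nat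
    and U :: "nat \<Rightarrow> (nat \<Rightarrow> 'a) \<Rightarrow> (nat \<Rightarrow> 'a)"
    and m m0 :: "nat \<Rightarrow> 'a" and iw jw :: "nat list"
  assumes "graded_bounded P bz tp n"
    and "bowtie_free P"
    and "good_action P bz tp n U"
    and "m0 \<in> maxchains P bz tp n" and "descents n U m0 = {}"
    and "m \<in> maxchains P bz tp n"
    and "iw \<in> lists {1..<n}" and "jw \<in> lists {1..<n}"
    and "applyw U iw m = m0" and "restless U iw m"
    and "applyw U jw m = m0" and "restless U jw m"
  shows "sperm iw = sperm jw"
proof -
  have FP: "finite P" using assms(1) unfolding graded_bounded_def by blast
  have s: "sink n U m0" using assms(5) by (simp add: sink_def)
  show ?thesis
  proof -
    have "\<forall>w w'. w \<in> lists {1..<n} \<and> w' \<in> lists {1..<n} \<and>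
     restless U w m \<and> restless U w' m \<and> sink n U (applyw U w m) \<and> sink n U (applyw U w' m) \<longrightarrow>
     applyw U w m = applyw U w' m \<and> sperm w = sperm w'"
      by (rule main_claim[OF assms(3) assms(2) FP assms(6)])
    then have "iw \<in> lists {1..<n} \<and> jw \<in> lists {1..<n} \<and>
     restless U iw m \<and> restless U jw m \<and> sink n U (applyw U iw m) \<and> sink n U (applyw U jw m) \<longrightarrow>
     applyw U iw m = applyw U jw m \<and> sperm iw = sperm jw" by blast
    then show ?thesis using assms(7-12) s by simp
  qed
qed

end
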